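(* Consider instances with binary domains ($|D_i|=2$ for all $i$) and a natural target distribution $\pi$ (i.e. $k\pi_i^j$ is an integer for all $i,j$), with loss $\|\cdot\|_1$. Consider the local search algorithm with parameter $\ell=1$: start from an arbitrary committee $A\subseteq C$ with $|A|=k$; while there exist $a\in A$ and $c\in C\setminus A$ with $\|\pi,r((A\setminus\{a\})\cup\{c\})\|_1<\|\pi,r(A)\|_1$, replace $A$ by $(A\setminus\{a\})\cup\{c\}$; output $A$. Then for every instance and every starting committee, the output $A$ satisfies $\|\pi,r(A)\|_1-\|\pi,r(A^* )\|_1\le p$, where $A^*$ is a committee of size $k$ optimal for $\|\cdot\|_1$ and $p$ is the number of attributes.
   Context: Attributes $X_1,\dots,X_p$, each with finite domain $D_i=\{x_i^1,\dots,x_i^{q_i}\}$. A candidate database is a finite set $C$ in which each candidate $c$ has a value vector $(X_1(c),\dots,X_p(c))\in D_1\times\dots\times D_p$ (different candidates may share a vector). A target distribution is $\pi=(\pi_1,\dots,\pi_p)$ with $\pi_i=(\pi_i^1,\dots,\pi_i^{q_i})$ nonnegative reals summing to $1$; $k\in\{1,\dots,|C|\}$. For $A\subseteq C$ with $|A|=k$, $r_i^j(A)=|\{c\in A: X_i(c)=x_i^j\}|/k$, and $\|\pi,r(A)\|_1=\sum_{i,j}|r_i^j(A)-\pi_i^j|$. A committee of size $k$ is optimal if it minimizes this loss over all $k$-element subsets of $C$. *)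

theory Defs
  imports "HOL-Analysis.Analysis"
begin

text \<open>Attributes are indexed by i < p; X i c is the value of attribute i for candidate c;
  D i is the (finite) domain of attribute i; tgt i v is the target share of value v of attribute i.\<close>

definition share :: "nat \<Rightarrow> (nat \<Rightarrow> 'c \<Rightarrow> 'v) \<Rightarrow> 'c set \<Rightarrow> nat \<Rightarrow> 'v \<Rightarrow> real" where
  "share k X A i v = real (card {c \<in> A. X i c = v}) / real k"

definition loss1 :: "nat \<Rightarrow> (nat \<Rightarrow> 'v set) \<Rightarrow> (nat \<Rightarrow> 'c \<Rightarrow> 'v) \<Rightarrow> (nat \<Rightarrow> 'v \<Rightarrow> real)
    \<Rightarrow> nat \<Rightarrow> 'c set \<Rightarrow> real" where
  "loss1 p D X tgt k A = (\<Sum>i<p. \<Sum>v\<in>D i. \<bar>share k X A i v - tgt i v\<bar>)"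

definition committee :: "'c set \<Rightarrow> nat \<Rightarrow> 'c set \<Rightarrow> bool" where
  "committee C k A \<longleftrightarrow> A \<subseteq> C \<and> card A = k"

definition optimal_committee :: "nat \<Rightarrow> (nat \<Rightarrow> 'v set) \<Rightarrow> (nat \<Rightarrow> 'c \<Rightarrow> 'v) \<Rightarrow> (nat \<Rightarrow> 'v \<Rightarrow> real)
    \<Rightarrow> 'c set \<Rightarrow> nat \<Rightarrow> 'c set \<Rightarrow> bool" where
  "optimal_committee p D X tgt C k A \<longleftrightarrow> committee C k A \<and>
     (\<forall>B. committee C k B \<longrightarrow> loss1 p D X tgt k A \<le> loss1 p D X tgt k B)"

definition ls_step :: "nat \<Rightarrow> (nat \<Rightarrow> 'v set) \<Rightarrow> (nat \<Rightarrow> 'c \<Rightarrow> 'v) \<Rightarrow> (nat \<Rightarrow> 'v \<Rightarrow> real)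
    \<Rightarrow> 'c set \<Rightarrow> nat \<Rightarrow> 'c set \<Rightarrow> 'c set \<Rightarrow> bool" where
  "ls_step p D X tgt C k A A' \<longleftrightarrow>
     (\<exists>a\<in>A. \<exists>c\<in>C - A. A' = insert c (A - {a}) \<and>
        loss1 p D X tgt k A' < loss1 p D X tgt k A)"

definition ls_output :: "nat \<Rightarrow> (nat \<Rightarrow> 'v set) \<Rightarrow> (nat \<Rightarrow> 'c \<Rightarrow> 'v) \<Rightarrow> (nat \<Rightarrow> 'v \<Rightarrow> real)
    \<Rightarrow> 'c set \<Rightarrow> nat \<Rightarrow> 'c set \<Rightarrow> 'c set \<Rightarrow> bool" where
  "ls_output p D X tgt C k A0 A \<longleftrightarrow>
     (ls_step p D X tgt C k)\<^sup>*\<^sup>* A0 A \<and> \<not> (\<exists>A'. ls_step p D X tgt C k A A')"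

end

theory Submission
  imports Defs
begin


lemma abs_step: fixes d e :: int
  assumes "d \<noteq> 0" "\<bar>e\<bar> \<le> 1" shows "\<bar>d + e\<bar> - \<bar>d\<bar> = sgn d * e"
  using assms by (cases "d > 0") (auto simp: abs_if sgn_if)

lemma sgn_le: fixes d e :: int shows "sgn d * (e - d) \<le> \<bar>e\<bar> - \<bar>d\<bar>"
proof (cases "d > 0")
  case True then show ?thesis by simp
next
  case False then show ?thesis by (cases "d = 0") auto
qed

lemma core:
  fixes x :: "nat \<Rightarrow> 'c \<Rightarrow> int" and T :: "nat \<Rightarrow> int" and A B :: "'c set"
  assumes fA: "finite A" and fB: "finite B" and cA: "card A = k" and cB: "card B = k"
    and x01: "\<And>i c. 0 \<le> x i c \<and> x i c \<le> 1"
    and T0: "\<And>i. i < p \<Longrightarrow> 0 \<le> T i \<and> T i \<le> int k"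
    and loc: "\<And>a c. a \<in> A - B \<Longrightarrow> c \<in> B - A \<Longrightarrow>
       (\<Sum>i<p. \<bar>sum (x i) A - T i\<bar>) \<le> (\<Sum>i<p. \<bar>sum (x i) A + x i c - x i a - T i\<bar>)"
  shows "2 * ((\<Sum>i<p. \<bar>sum (x i) A - T i\<bar>) - (\<Sum>i<p. \<bar>sum (x i) B - T i\<bar>)) \<le> int p * int k"
proof (cases "A - B = {}")
  case True
  then have "A \<subseteq> B" by blast
  then have "A = B" using card_subset_eq[OF fB] cA cB by auto
  then show ?thesis by simp
next
  case False
  define P where "P = A - B"
  define Q where "Q = B - A"
  define m where "m = card P"
  have fP: "finite P" and fQ: "finite Q" using fA fB by (auto simp: P_def Q_def)
  have mP: "m = card A - card (A \<inter> B)" unfolding m_def P_def using card_Diff_subset_Int[of A B] fA by simp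
  have mQ: "card Q = card B - card (A \<inter> B)" unfolding Q_def using card_Diff_subset_Int[of B A] fB by (simp add: Int_commute)
  have cQ: "card Q = m" using mP mQ cA cB by simp
  have mk: "m \<le> k" using mP cA by simp
  have mpos: "m > 0" using False fP unfolding m_def P_def by auto
  define d where "d i = sum (x i) A - T i" for i
  define e where "e i = sum (x i) B - T i" for i
  define h where "h i a c = \<bar>d i + (x i c - x i a)\<bar> - \<bar>d i\<bar>" for i a c
  define Bd where "Bd i = (if d i = 0 then int m else \<bar>e i\<bar> - \<bar>d i\<bar>)" for i
  have "A - A \<inter> B = A - B" "B - A \<inter> B = B - A" by blast+
  have SA: "sum (x i) A = sum (x i) (A \<inter> B) + sum (x i) P" for i
    unfolding P_def using sum.subset_diff[of "A \<inter> B" A "x i"] fA \<open>A - A \<inter> B = A - B\<close> by simp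
  have SB: "sum (x i) B = sum (x i) (A \<inter> B) + sum (x i) Q" for i
    unfolding Q_def using sum.subset_diff[of "A \<inter> B" B "x i"] fB \<open>B - A \<inter> B = B - A\<close> by simp
  have ed: "e i - d i = sum (x i) Q - sum (x i) P" for i
    unfolding e_def d_def using SA SB by simp
  have step1: "0 \<le> (\<Sum>i<p. h i a c)" if "a \<in> P" "c \<in> Q" for a c
  proof -
    have "(\<Sum>i<p. h i a c) = (\<Sum>i<p. \<bar>sum (x i) A + x i c - x i a - T i\<bar>) - (\<Sum>i<p. \<bar>sum (x i) A - T i\<bar>)"
      unfolding h_def d_def by (simp add: sum_subtractf algebra_simps)
    then show ?thesis using loc[of a c] that unfolding P_def Q_def by simp
  qed
  have "0 \<le> (\<Sum>a\<in>P. \<Sum>c\<in>Q. \<Sum>i<p. h i a c)"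
    using step1 by (simp add: sum_nonneg)
  also have "\<dots> = (\<Sum>a\<in>P. \<Sum>i<p. \<Sum>c\<in>Q. h i a c)"
    by (rule sum.cong[OF refl], rule sum.swap)
  also have "\<dots> = (\<Sum>i<p. \<Sum>a\<in>P. \<Sum>c\<in>Q. h i a c)"
    by (rule sum.swap)
  also have "\<dots> \<le> (\<Sum>i<p. int m * Bd i)"
  proof (rule sum_mono)
    fix i assume "i \<in> {..<p}"
    show "(\<Sum>a\<in>P. \<Sum>c\<in>Q. h i a c) \<le> int m * Bd i"
    proof (cases "d i = 0")
      case True
      have "(\<Sum>a\<in>P. \<Sum>c\<in>Q. h i a c) \<le> (\<Sum>a\<in>P. \<Sum>c\<in>Q. 1)"
        proof (intro sum_mono)
          fix a c assume "a \<in> P" "c \<in> Q"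
          have "0 \<le> x i a" "x i a \<le> 1" "0 \<le> x i c" "x i c \<le> 1" using x01 by auto
          then show "h i a c \<le> 1" unfolding h_def using True by linarith
        qed
      also have "\<dots> = int m * int m" using cQ m_def by simp
      finally show ?thesis using True Bd_def by simp
    next
      case F: False
      have "(\<Sum>a\<in>P. \<Sum>c\<in>Q. h i a c) = (\<Sum>a\<in>P. \<Sum>c\<in>Q. sgn (d i) * (x i c - x i a))"
      proof (intro sum.cong refl)
        fix a c
        have "0 \<le> x i a" "x i a \<le> 1" "0 \<le> x i c" "x i c \<le> 1" using x01 by auto
        then have "\<bar>x i c - x i a\<bar> \<le> 1" by linarith
        then show "h i a c = sgn (d i) * (x i c - x i a)" unfolding h_def using abs_step F by blast
      qed
      also have "\<dots> = sgn (d i) * (\<Sum>a\<in>P. \<Sum>c\<in>Q. (x i c - x i a))"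
        by (simp add: sum_distrib_left)
      also have "(\<Sum>a\<in>P. \<Sum>c\<in>Q. (x i c - x i a)) = int m * (sum (x i) Q - sum (x i) P)"
        using cQ m_def by (simp add: sum_subtractf sum_distrib_left algebra_simps)
      also have "sgn (d i) * (int m * (sum (x i) Q - sum (x i) P)) = int m * (sgn (d i) * (e i - d i))"
        using ed[of i] by (simp only: mult.left_commute)
      also have "\<dots> \<le> int m * Bd i"
      proof -
        have "sgn (d i) * (e i - d i) \<le> \<bar>e i\<bar> - \<bar>d i\<bar>"
          by (rule sgn_le)
        then show ?thesis using F Bd_def by (simp add: mult_left_mono)
      qed
      finally show ?thesis .
    qed
  qed
  also have "\<dots> = int m * (\<Sum>i<p. Bd i)" by (simp add: sum_distrib_left)
  finally have Bnn: "0 \<le> (\<Sum>i<p. Bd i)" using mpos by (simp add: zero_le_mult_iff)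
  have dk: "\<bar>d i\<bar> \<le> int k" if "i < p" for i
  proof -
    have "0 \<le> sum (x i) A" using x01 by (intro sum_nonneg) auto
    moreover have "sum (x i) A \<le> int k"
      using sum_bounded_above[of A "x i" 1] x01 cA by auto
    ultimately show ?thesis using T0[OF that] d_def by (auto simp: abs_if)
  qed
  have per: "2 * (\<bar>d i\<bar> - \<bar>e i\<bar>) \<le> int k - Bd i" if "i < p" for i
    using dk[OF that] mk by (cases "d i = 0") (auto simp: Bd_def)
  have "2 * ((\<Sum>i<p. \<bar>d i\<bar>) - (\<Sum>i<p. \<bar>e i\<bar>)) = (\<Sum>i<p. 2 * (\<bar>d i\<bar> - \<bar>e i\<bar>))"
    by (simp add: sum_subtractf sum_distrib_left)
  also have "\<dots> \<le> (\<Sum>i<p. int k - Bd i)" using per by (intro sum_mono) auto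
  also have "\<dots> = int p * int k - (\<Sum>i<p. Bd i)" by (simp add: sum_subtractf)
  also have "\<dots> \<le> int p * int k" using Bnn by simp
  finally show ?thesis unfolding d_def e_def .
qed

lemma attr:
  fixes S :: "'c set" and X :: "nat \<Rightarrow> 'c \<Rightarrow> 'v"
  assumes fS: "finite S" and cS: "card S = k" and kp: "k > 0"
    and vals: "\<forall>c\<in>S. X i c \<in> D i" and c2: "card (D i) = 2" and uD: "u \<in> D i"
    and ts: "(\<Sum>v\<in>D i. tgt i v) = 1"
  shows "(\<Sum>v\<in>D i. \<bar>share k X S i v - tgt i v\<bar>)
     = 2 / real k * \<bar>real (card {c\<in>S. X i c = u}) - real k * tgt i u\<bar>"
proof -
  have fD: "finite (D i)" using c2 card.infinite by force
  have "card (D i - {u}) = 1" using c2 uD fD by simp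
  then obtain w where w: "D i - {u} = {w}" by (auto simp: card_1_singleton_iff)
  have wu: "w \<noteq> u" using w by auto
  have Dq: "D i = {u, w}" using w uD by auto
  have Seq: "S = {c\<in>S. X i c = u} \<union> {c\<in>S. X i c = w}" using vals Dq by auto
  have "card S = card ({c\<in>S. X i c = u} \<union> {c\<in>S. X i c = w})" using Seq by metis
  also have "\<dots> = card {c\<in>S. X i c = u} + card {c\<in>S. X i c = w}"
    using fS wu by (intro card_Un_disjoint) auto
  finally have cnt: "card {c\<in>S. X i c = u} + card {c\<in>S. X i c = w} = k" using cS by simp
  have tsum: "tgt i u + tgt i w = 1" using ts Dq wu by simp
  define a where "a = real (card {c\<in>S. X i c = u})"
  define b where "b = real (card {c\<in>S. X i c = w})"
  have ab: "a + b = real k" using cnt unfolding a_def b_def by (metis of_nat_add)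
  have "(\<Sum>v\<in>D i. \<bar>share k X S i v - tgt i v\<bar>) = \<bar>a / k - tgt i u\<bar> + \<bar>b / k - tgt i w\<bar>"
    using Dq wu by (simp add: share_def a_def b_def)
  also have "b / k - tgt i w = -(a / k - tgt i u)"
  proof -
    have "b / k = 1 - a / k" using ab kp by (simp add: field_simps)
    moreover have "tgt i w = 1 - tgt i u" using tsum by simp
    ultimately show ?thesis by simp
  qed
  also have "a / k - tgt i u = (a - k * tgt i u) / k" using kp by (simp add: field_simps)
  finally show ?thesis using kp by (simp add: a_def abs_divide)
qed

lemma swap_comm:
  assumes "finite C" "committee C k A" "a \<in> A" "c \<in> C - A"
  shows "committee C k (insert c (A - {a}))"
proof -
  have fA: "finite A" using assms(1,2) unfolding committee_def by (meson finite_subset)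
  have "card (insert c (A - {a})) = Suc (card (A - {a}))" using assms(4) fA by simp
  also have "\<dots> = card A" using assms(3) fA card_Suc_Diff1 by metis
  finally show ?thesis using assms(2,3,4) unfolding committee_def by auto
qed

lemma step_comm:
  assumes "finite C" "committee C k A" "ls_step p D X tgt C k A A'"
  shows "committee C k A'"
proof -
  obtain a c where a: "a \<in> A" and c: "c \<in> C - A" and A': "A' = insert c (A - {a})"
    using assms(3) unfolding ls_step_def by blast
  have fA: "finite A" using assms(1,2) unfolding committee_def by (meson finite_subset)
  have "card A' = Suc (card (A - {a}))" using A' c fA by simp
  also have "\<dots> = card A" using a fA card_Suc_Diff1 by metis
  finally show ?thesis using assms(2) a c A' unfolding committee_def by auto
qed


theorem theorem1:
  fixes C :: "'c set" and p k :: nat and D :: "nat \<Rightarrow> 'v set"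
    and X :: "nat \<Rightarrow> 'c \<Rightarrow> 'v" and tgt :: "nat \<Rightarrow> 'v \<Rightarrow> real"
    and A0 A Astar :: "'c set"
  assumes finC: "finite C"
    and binary: "\<And>i. i < p \<Longrightarrow> card (D i) = 2"
    and vals: "\<And>i c. i < p \<Longrightarrow> c \<in> C \<Longrightarrow> X i c \<in> D i"
    and tgt_nonneg: "\<And>i v. i < p \<Longrightarrow> v \<in> D i \<Longrightarrow> tgt i v \<ge> 0"
    and tgt_sum: "\<And>i. i < p \<Longrightarrow> (\<Sum>v\<in>D i. tgt i v) = 1"
    and natural: "\<And>i v. i < p \<Longrightarrow> v \<in> D i \<Longrightarrow> real k * tgt i v \<in> \<int>"
    and k_pos: "1 \<le> k" and k_le: "k \<le> card C"
    and start: "committee C k A0"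
    and result: "ls_output p D X tgt C k A0 A"
    and opt: "optimal_committee p D X tgt C k Astar"
  shows "loss1 p D X tgt k A - loss1 p D X tgt k Astar \<le> real p"
  
proof -
  have c2: "\<And>i. i < p \<Longrightarrow> finite (D i) \<and> D i \<noteq> {}"
    using binary by (metis card.empty card.infinite zero_neq_numeral)
  define u where "u i = (SOME v. v \<in> D i)" for i
  have uD: "u i \<in> D i" if "i < p" for i
    using c2[OF that] unfolding u_def by (simp add: some_in_eq)
  define T where "T i = (SOME T::int. real_of_int T = real k * tgt i (u i))" for i
  have T: "real_of_int (T i) = real k * tgt i (u i)" if "i < p" for i
  proof -
    from natural[OF that uD[OF that]] obtain z where "real k * tgt i (u i) = real_of_int z"
      by (auto elim: Ints_cases)
    then show ?thesis unfolding T_def by (metis (mono_tags, lifting) someI_ex)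
  qed
  have tle: "tgt i (u i) \<le> 1" if "i < p" for i
    using member_le_sum[of "u i" "D i" "tgt i"] uD[OF that] c2[OF that] tgt_nonneg[OF that] tgt_sum[OF that]
    by auto
  have T0: "0 \<le> T i \<and> T i \<le> int k" if "i < p" for i
  proof -
    have "0 \<le> real_of_int (T i)" using T[OF that] tgt_nonneg[OF that uD[OF that]] by simp
    moreover have "real_of_int (T i) \<le> real_of_int (int k)"
      using T[OF that] tle[OF that] mult_left_mono[of "tgt i (u i)" 1 "real k"] by simp
    ultimately show ?thesis by linarith
  qed
  define x where "x i c = (if X i c = u i then 1 else 0::int)" for i c
  have x01: "\<And>i c. 0 \<le> x i c \<and> x i c \<le> 1" unfolding x_def by auto
  have sx: "sum (x i) S = int (card {c\<in>S. X i c = u i})" if "finite S" for i S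
  proof -
    have "sum (x i) S = (\<Sum>c\<in>S. if X i c = u i then 1 else 0)" unfolding x_def ..
    also have "\<dots> = sum (\<lambda>_. 1) {c\<in>S. X i c = u i}" using sum.inter_filter[OF that, of "\<lambda>_. 1::int"] by simp
    finally show ?thesis by simp
  qed
  define F where "F S = (\<Sum>i<p. \<bar>sum (x i) S - T i\<bar>)" for S
  have lossF: "loss1 p D X tgt k S = 2 / real k * real_of_int (F S)" if "committee C k S" for S
  proof -
    have fS: "finite S" and sC: "S \<subseteq> C" and cS: "card S = k"
      using that finC unfolding committee_def by (auto intro: finite_subset)
    have "loss1 p D X tgt k S = (\<Sum>i<p. 2 / real k * \<bar>real (card {c\<in>S. X i c = u i}) - real k * tgt i (u i)\<bar>)"
      unfolding loss1_def
    proof (rule sum.cong[OF refl])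
      fix i assume "i \<in> {..<p}"
      then have i: "i < p" by simp
      show "(\<Sum>v\<in>D i. \<bar>share k X S i v - tgt i v\<bar>) = 2 / real k * \<bar>real (card {c\<in>S. X i c = u i}) - real k * tgt i (u i)\<bar>"
        using attr[where D=D and i=i and u="u i" and tgt=tgt and X=X and S=S and k=k, OF fS cS _ _ binary[OF i] uD[OF i] tgt_sum[OF i]] k_pos vals[OF i] sC by auto
    qed
    also have "\<dots> = (\<Sum>i<p. 2 / real k * real_of_int \<bar>sum (x i) S - T i\<bar>)"
    proof (rule sum.cong[OF refl])
      fix i assume "i \<in> {..<p}"
      then have i: "i < p" by simp
      show "2 / real k * \<bar>real (card {c\<in>S. X i c = u i}) - real k * tgt i (u i)\<bar> = 2 / real k * real_of_int \<bar>sum (x i) S - T i\<bar>"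
        using sx[OF fS, of i] T[OF i] by simp
    qed
    also have "\<dots> = 2 / real k * real_of_int (F S)" unfolding F_def by (simp add: sum_distrib_left)
    finally show ?thesis .
  qed
  have rt: "(ls_step p D X tgt C k)\<^sup>*\<^sup>* A0 A" using result unfolding ls_output_def by simp
  have comA: "committee C k A"
    using rt start
    by (induction rule: rtranclp_induct) (auto intro: step_comm[OF finC])
  have comS: "committee C k Astar" using opt unfolding optimal_committee_def by simp
  have fA: "finite A" and cA: "card A = k" and AC: "A \<subseteq> C"
    using comA finC unfolding committee_def by (auto intro: finite_subset)
  have fS: "finite Astar" and cS: "card Astar = k" and SC: "Astar \<subseteq> C"
    using comS finC unfolding committee_def by (auto intro: finite_subset)
  have loc: "(\<Sum>i<p. \<bar>sum (x i) A - T i\<bar>) \<le> (\<Sum>i<p. \<bar>sum (x i) A + x i c - x i a - T i\<bar>)"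
    if a: "a \<in> A - Astar" and c: "c \<in> Astar - A" for a c
  proof -
    define A' where "A' = insert c (A - {a})"
    have cC: "c \<in> C - A" using c SC by auto
    have "ls_step p D X tgt C k A A' \<longleftrightarrow> loss1 p D X tgt k A' < loss1 p D X tgt k A"
      unfolding ls_step_def A'_def using a cC by blast
    then have "loss1 p D X tgt k A \<le> loss1 p D X tgt k A'"
      using result unfolding ls_output_def by auto
    moreover have "committee C k A'"
      unfolding A'_def using swap_comm[OF finC comA _ cC] a by blast
    ultimately have "2 / real k * real_of_int (F A) \<le> 2 / real k * real_of_int (F A')"
      using lossF comA by simp
    then have FA: "F A \<le> F A'" using k_pos by (simp add: divide_simps)
    have "sum (x i) A' = sum (x i) A + x i c - x i a" for i
    proof -
      have "sum (x i) A' = x i c + sum (x i) (A - {a})" unfolding A'_def using fA c by simp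
      also have "sum (x i) (A - {a}) = sum (x i) A - x i a" using a fA by (simp add: sum_diff1)
      finally show ?thesis by simp
    qed
    then show ?thesis using FA unfolding F_def by simp
  qed
  have "2 * (F A - F Astar) \<le> int p * int k"
    unfolding F_def by (rule core[OF fA fS cA cS x01 T0 loc]) auto
  then have R: "2 * (real_of_int (F A) - real_of_int (F Astar)) \<le> real p * real k"
  proof -
    have "real_of_int (2 * (F A - F Astar)) \<le> real_of_int (int p * int k)"
      by (simp only: of_int_le_iff) fact
    then show ?thesis by simp
  qed
  have "loss1 p D X tgt k A - loss1 p D X tgt k Astar = 2 * (real_of_int (F A) - real_of_int (F Astar)) / real k"
    using lossF[OF comA] lossF[OF comS] by (simp add: diff_divide_distrib)
  also have "\<dots> \<le> real p" using R k_pos by (simp add: pos_divide_le_eq)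
  finally show ?thesis .
qed

end
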